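(* The determinant of $\mathbf T$ satisfies $$\det(\mathbf T)=\pm\,\beta_{-b}^{\binom{a+b-1}{a-1}}\,\beta_a^{\binom{a+b-1}{a}}$$ for some sign $\pm$; moreover exactly one bijection $\pi$ of the set of $a$-subsets of $[-b,a-1]$ to itself satisfies $\mathbf T[I,\pi(I)]\neq0$ for all $I$ whenever $\beta_{-b}\beta_a\ne0$, namely $\pi(I)=(I\cup\{a\})\setminus\{-b\}-1$ if $-b\in I$ and $\pi(I)=I-1$ if $-b\notin I$.
   Context: Let $S$ be a finite set of integers with $a:=\max S\ge 1$ and $b:=-\min S\ge 1$. Each $s\in S$ carries a weight $\omega_s$ in a field $K$ of characteristic $0$; set $\omega_s:=0$ for $s\in\mathbb Z\setminus S$, and for $s\in\mathbb Z$ put $\beta_s:=\delta_{s,0}-\omega_s$. Notation: $[m,n]:=\{i\in\mathbb Z: m\le i\le n\}$, $X+c:=\{x+c:x\in X\}$ (and $X-c:=X+(-c)$); an $n$-subset is a subset of cardinality $n$. For a finite set $I\subseteq\mathbb Z$ and $s\in\mathbb Z$, $\epsilon_s(I):=(-1)^{\#\{i\in I:\ i<s\}}$. $\mathbf T$ is the square matrix with rows and columns indexed by the $a$-subsets of $[-b,a-1]$ and entries $\mathbf T[I,J]:=\epsilon_s(I)\beta_s$ if there is an integer $s$ with $I\cup\{a\}=(J+1)\cup\{s\}$ (such $s$ is then unique), and $\mathbf T[I,J]:=0$ otherwise. *)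

theory Defs
  imports "HOL-Combinatorics.Permutations"
begin

definition beta :: "(int \<Rightarrow> 'k::field_char_0) \<Rightarrow> int \<Rightarrow> 'k" where
  "beta \<omega> s = (if s = 0 then 1 else 0) - \<omega> s"

definition asubsets :: "int \<Rightarrow> int \<Rightarrow> int set set" where
  "asubsets a b = {I. I \<subseteq> {-b..a-1} \<and> card I = nat a}"

definition shift :: "int set \<Rightarrow> int \<Rightarrow> int set" where
  "shift X c = (\<lambda>x. x + c) ` X"

definition eps :: "int \<Rightarrow> int set \<Rightarrow> 'k::field_char_0" where
  "eps s I = (-1) ^ card {i \<in> I. i < s}"

definition Tmat :: "(int \<Rightarrow> 'k::field_char_0) \<Rightarrow> int \<Rightarrow> int set \<Rightarrow> int set \<Rightarrow> 'k" where
  "Tmat \<omega> a I J =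
     (if \<exists>s. I \<union> {a} = shift J 1 \<union> {s}
      then (let s = (THE s. I \<union> {a} = shift J 1 \<union> {s}) in eps s I * beta \<omega> s)
      else 0)"

definition det_on :: "'i set \<Rightarrow> ('i \<Rightarrow> 'i \<Rightarrow> 'k::comm_ring_1) \<Rightarrow> 'k" where
  "det_on X M = (\<Sum>p \<in> {p. p permutes X}. of_int (sign p) * (\<Prod>i\<in>X. M i (p i)))"

end

theory Submission
  imports Defs
begin

lemma mem_shift: "x \<in> shift X c \<longleftrightarrow> x - c \<in> X"
  unfolding shift_def by (auto simp: image_iff) (metis diff_add_cancel)

lemma shift_shift: "shift (shift X c) d = shift X (c + d)"
  unfolding shift_def by (auto simp: image_iff add.assoc)

lemma shift_0: "shift X 0 = X"
  unfolding shift_def by simp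

lemma shift_inj: "shift X c = shift Y c \<Longrightarrow> X = Y"
  by (metis shift_shift shift_0 add.right_inverse)

lemma card_shift: "card (shift X c) = card X"
  unfolding shift_def by (rule card_image) (simp add: inj_on_def)

lemma finite_shift: "finite X \<Longrightarrow> finite (shift X c)"
  unfolding shift_def by simp

lemma sum_shift: "finite X \<Longrightarrow> \<Sum>(shift X c) = \<Sum>X + c * int (card X)"
proof -
  assume f: "finite X"
  have "\<Sum>(shift X c) = (\<Sum>x\<in>X. x + c)"
    unfolding shift_def by (subst sum.reindex) (auto simp: inj_on_def)
  also have "\<dots> = \<Sum>X + c * int (card X)" by (simp add: sum.distrib mult.commute)
  finally show ?thesis .
qed

lemma sub_shift: "X \<subseteq> {l..u} \<Longrightarrow> shift X c \<subseteq> {l+c..u+c}"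
  unfolding shift_def by auto

lemma in_ival: "I \<subseteq> {l..u} \<Longrightarrow> x \<in> I \<Longrightarrow> l \<le> x \<and> x \<le> (u::int)"
  by auto

lemma uniq_s: "X \<union> {s} = X \<union> {t} \<Longrightarrow> s \<notin> X \<Longrightarrow> t = s"
  by blast

lemma T_val:
  assumes "I \<union> {a} = shift J 1 \<union> {s}" "s \<notin> shift J 1"
  shows "Tmat \<omega> a I J = eps s I * beta \<omega> s"
proof -
  have "(THE t. I \<union> {a} = shift J 1 \<union> {t}) = s"
    by (rule the_equality) (use assms uniq_s in metis)+
  then show ?thesis using assms unfolding Tmat_def by (auto simp: Let_def)
qed

lemma T_struct:
  assumes I: "I \<in> asubsets a b" and J: "J \<in> asubsets a b" and nz: "Tmat \<omega> a I J \<noteq> 0"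
  shows "\<exists>s. I \<union> {a} = shift J 1 \<union> {s} \<and> s \<notin> shift J 1 \<and> Tmat \<omega> a I J = eps s I * beta \<omega> s"
proof -
  from nz obtain s where eq: "I \<union> {a} = shift J 1 \<union> {s}"
    unfolding Tmat_def by (auto split: if_splits)
  have fI: "finite I" "card I = nat a" "I \<subseteq> {-b..a-1}" using I unfolding asubsets_def
    by (auto intro: finite_subset)
  have fJ: "finite J" "card J = nat a" using J unfolding asubsets_def
    by (auto intro: finite_subset)
  have ns: "s \<notin> shift J 1"
  proof
    assume "s \<in> shift J 1"
    then have "I \<union> {a} = shift J 1" using eq by blast
    moreover have "a \<notin> I" using fI by auto
    ultimately have "card (shift J 1) = Suc (card I)" using fI by (metis Un_insert_right card_insert_disjoint sup_bot.right_neutral)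
    then show False using fI fJ card_shift by simp
  qed
  show ?thesis using eq ns T_val by blast
qed

lemma main_comb:
  fixes \<omega> :: "int \<Rightarrow> 'k::field_char_0" and a b :: int
  assumes a1: "a \<ge> 1" and b1: "b \<ge> 1"
  defines "A \<equiv> asubsets a b"
  defines "pi \<equiv> (\<lambda>I. if I \<in> asubsets a b then
                      (if -b \<in> I then shift ((I \<union> {a}) - {-b}) (-1) else shift I (-1))
                    else I)"
  shows "finite A" "pi permutes A"
    "\<And>p. p permutes A \<Longrightarrow> (\<forall>I\<in>A. Tmat \<omega> a I (p I) \<noteq> 0) \<Longrightarrow> p = pi"
    "\<And>I. I \<in> A \<Longrightarrow> Tmat \<omega> a I (pi I) = (if -b \<in> I then beta \<omega> (-b) else (-1)^nat a * beta \<omega> a)"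
proof -
  have memA: "I \<in> A \<longleftrightarrow> I \<subseteq> {-b..a-1} \<and> card I = nat a" for I
    unfolding A_def asubsets_def by simp
  show fin: "finite A"
    by (rule finite_subset[of _ "Pow {-b..a-1}"]) (use memA in blast, simp)
  have finI: "I \<in> A \<Longrightarrow> finite I" for I using memA finite_subset by blast
  have piA: "pi I \<in> A" if I: "I \<in> A" for I
  proof (cases "-b \<in> I")
    case True
    let ?X = "(I \<union> {a}) - {-b}"
    have Isub: "I \<subseteq> {-b..a-1}" using I memA by blast
    have aI: "a \<notin> I" using I memA by auto
    have "card (I \<union> {a}) = Suc (nat a)" using aI finI[OF I] memA I by simp
    then have "card ?X = nat a" using True by simp
    moreover have "?X \<subseteq> {-b+1..a}"
    proof
      fix x assume x: "x \<in> ?X"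
      then have "x = a \<or> (x \<in> I \<and> x \<noteq> -b)" by blast
      then show "x \<in> {-b+1..a}"
      proof
        assume "x = a" then show ?thesis using a1 b1 by simp
      next
        assume "x \<in> I \<and> x \<noteq> -b"
        then show ?thesis using in_ival[OF Isub, of x] by simp
      qed
    qed
    then have "shift ?X (-1) \<subseteq> {-b+1+(-1)..a+(-1)}" by (rule sub_shift)
    then have "shift ?X (-1) \<subseteq> {-b..a-1}" by simp
    ultimately have "shift ?X (-1) \<in> A" unfolding memA
      by (simp add: card_shift)
    then show ?thesis using True I by (simp add: pi_def A_def)
  next
    case False
    have Isub: "I \<subseteq> {-b..a-1}" using I memA by blast
    have "I \<subseteq> {-b+1..a-1}"
    proof
      fix x assume "x \<in> I"
      then show "x \<in> {-b+1..a-1}" using in_ival[OF Isub, of x] False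
        by (cases "x = -b") auto
    qed
    then have "shift I (-1) \<subseteq> {-b+1+(-1)..a-1+(-1)}" by (rule sub_shift)
    then have "shift I (-1) \<subseteq> {-b..a-1}" by (auto simp: subset_iff)
    then have "shift I (-1) \<in> A" using I unfolding memA
      by (simp add: card_shift)
    then show ?thesis using False I by (simp add: pi_def A_def)
  qed
  have pi_inj: "inj_on pi A"
  proof (rule inj_onI)
    fix I J assume I: "I \<in> A" and J: "J \<in> A" and e: "pi I = pi J"
    have aI: "a \<notin> I" "a \<notin> J" using I J memA by auto
    have ab: "a \<noteq> -b" using a1 b1 by simp
    have mI': "a - 1 \<in> pi I \<longleftrightarrow> -b \<in> I" if K: "I \<in> A" "a \<notin> I" for I
    proof (cases "-b \<in> I")
      case True
      then have "pi I = shift ((I \<union> {a}) - {-b}) (-1)" using K by (simp add: pi_def A_def)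
      then show ?thesis using True ab by (simp add: mem_shift)
    next
      case False
      then have "pi I = shift I (-1)" using K by (simp add: pi_def A_def)
      then show ?thesis using False K by (simp add: mem_shift)
    qed
    show "I = J"
    proof (cases "-b \<in> I")
      case True
      then have bJ: "-b \<in> J" using e mI'[OF I aI(1)] mI'[OF J aI(2)] by simp
      have "shift ((I \<union> {a}) - {-b}) (-1) = shift ((J \<union> {a}) - {-b}) (-1)"
        using e True bJ I J by (simp add: pi_def A_def)
      then have X: "(I \<union> {a}) - {-b} = (J \<union> {a}) - {-b}" by (rule shift_inj)
      have r: "K = insert (-b) ((K \<union> {a}) - {-b}) - {a}" if "-b \<in> K" "a \<notin> K" for K
        using that ab by blast
      show ?thesis using r[OF True aI(1)] r[OF bJ aI(2)] X by metis
    next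
      case False
      then have bJ: "-b \<notin> J" using e mI'[OF I aI(1)] mI'[OF J aI(2)] by simp
      have "shift I (-1) = shift J (-1)"
        using e False bJ I J by (simp add: pi_def A_def)
      then show ?thesis by (rule shift_inj)
    qed
  qed
  have "pi ` A = A" using endo_inj_surj[OF fin _ pi_inj] piA by blast
  then have "bij_betw pi A A" by (simp add: bij_betw_def pi_inj)
  moreover have "x \<notin> A \<Longrightarrow> pi x = x" for x by (simp add: pi_def A_def)
  ultimately show piperm: "pi permutes A"
    by (rule bij_imp_permutes)
  define g where "g I = (if -b \<in> I then -b else a)" for I
  have sum_pi: "\<Sum>(pi I) = \<Sum>I - g I" if I: "I \<in> A" for I
  proof (cases "-b \<in> I")
    case True
    have aI: "a \<notin> I" using I memA by auto
    have c: "card ((I \<union> {a}) - {-b}) = nat a"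
    proof -
      have "card (I \<union> {a}) = Suc (nat a)" using aI finI[OF I] memA I by simp
      then show ?thesis using True by simp
    qed
    have "\<Sum>((I \<union> {a}) - {-b}) = \<Sum>(I \<union> {a}) - (-b)"
      using True finI[OF I] by (simp add: sum_diff1)
    also have "\<Sum>(I \<union> {a}) = \<Sum>I + a" using aI finI[OF I] by simp
    finally show ?thesis using True I c finI[OF I] a1
      by (simp add: pi_def A_def sum_shift g_def)
  next
    case False
    then show ?thesis using I finI[OF I] memA a1
      by (simp add: pi_def A_def sum_shift g_def)
  qed
  have sumg: "(\<Sum>I\<in>A. g I) = 0"
  proof -
    have "(\<Sum>I\<in>A. g I) = (\<Sum>I\<in>A. \<Sum>I - \<Sum>(pi I))"
      by (rule sum.cong) (auto simp: sum_pi)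
    also have "\<dots> = (\<Sum>I\<in>A. \<Sum>I) - (\<Sum>I\<in>A. \<Sum>(pi I))" by (simp add: sum_subtractf)
    also have "(\<Sum>I\<in>A. \<Sum>(pi I)) = (\<Sum>I\<in>A. \<Sum>I)"
      using sum.permute[OF piperm, of "\<lambda>I. \<Sum>I"] by (simp add: comp_def)
    finally show ?thesis by simp
  qed
  show "p = pi" if pp: "p permutes A" and nz: "\<forall>I\<in>A. Tmat \<omega> a I (p I) \<noteq> 0" for p
  proof -
    define f where "f I = \<Sum>I - \<Sum>(p I)" for I
    have step: "f I \<le> g I \<and> (f I = g I \<longrightarrow> p I = pi I)" if I: "I \<in> A" for I
    proof -
      have pI: "p I \<in> A" using pp I by (simp add: permutes_in_image)
      obtain s where eq: "I \<union> {a} = shift (p I) 1 \<union> {s}" and ns: "s \<notin> shift (p I) 1"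
        using T_struct[of I a b "p I" \<omega>] I pI nz unfolding A_def by blast
      have aI: "a \<notin> I" using I memA by auto
      have fp: "finite (p I)" using finI[OF pI] .
      have "\<Sum>(I \<union> {a}) = \<Sum>I + a" using aI finI[OF I] by simp
      moreover have "\<Sum>(shift (p I) 1 \<union> {s}) = \<Sum>(p I) + a + s"
        using ns fp finite_shift[OF fp] sum_shift[OF fp, of 1] pI memA a1 by simp
      ultimately have fs: "f I = s" using eq by (simp add: f_def)
      have sX: "shift (p I) 1 = (I \<union> {a}) - {s}" using eq ns by blast
      have pIeq: "p I = shift ((I \<union> {a}) - {s}) (-1)"
        using sX by (metis shift_shift shift_0 add.right_inverse)
      show ?thesis
      proof (cases "-b \<in> I")
        case True
        have "shift (p I) 1 \<subseteq> {-b+1..a-1+1}" using pI memA sub_shift by blast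
        then have "-b \<notin> shift (p I) 1" by auto
        then have "s = -b" using eq True by blast
        then show ?thesis using fs True pIeq I by (simp add: g_def pi_def A_def)
      next
        case False
        have "s \<in> I \<union> {a}" using eq by blast
        moreover have "I \<subseteq> {-b..a-1}" using I memA by blast
        ultimately have "s \<le> a" using in_ival[of I "-b" "a-1" s] by auto
        moreover have "s = a \<Longrightarrow> p I = pi I"
          using pIeq False I aI by (simp add: pi_def A_def)
        ultimately show ?thesis using fs False by (simp add: g_def)
      qed
    qed
    have sumf: "(\<Sum>I\<in>A. f I) = 0"
    proof -
      have "(\<Sum>I\<in>A. f I) = (\<Sum>I\<in>A. \<Sum>I) - (\<Sum>I\<in>A. \<Sum>(p I))"
        by (simp add: f_def sum_subtractf)
      also have "(\<Sum>I\<in>A. \<Sum>(p I)) = (\<Sum>I\<in>A. \<Sum>I)"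
        using sum.permute[OF pp, of "\<lambda>I. \<Sum>I"] by (simp add: comp_def)
      finally show ?thesis by simp
    qed
    have "(\<Sum>I\<in>A. g I - f I) = 0" using sumf sumg by (simp add: sum_subtractf)
    then have "\<forall>I\<in>A. g I - f I = 0"
      using sum_nonneg_eq_0_iff[OF fin, of "\<lambda>I. g I - f I"] step by auto
    then have "\<forall>I\<in>A. p I = pi I" using step by auto
    moreover have "I \<notin> A \<Longrightarrow> p I = pi I" for I
      using pp permutes_not_in[OF pp] by (simp add: pi_def A_def)
    ultimately show ?thesis by blast
  qed
  show "Tmat \<omega> a I (pi I) = (if -b \<in> I then beta \<omega> (-b) else (-1)^nat a * beta \<omega> a)"
    if I: "I \<in> A" for I
  proof (cases "-b \<in> I")
    case True
    let ?X = "(I \<union> {a}) - {-b}"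
    have "shift (pi I) 1 = ?X" using True I
      by (simp add: pi_def A_def shift_shift shift_0)
    then have eq: "I \<union> {a} = shift (pi I) 1 \<union> {-b}" and ns: "-b \<notin> shift (pi I) 1"
      using True by auto
    have Isub: "I \<subseteq> {-b..a-1}" using I memA by blast
    have E: "{i \<in> I. i < -b} = {}" using in_ival[OF Isub] by force
    have "eps (-b) I = (1::'k)" unfolding eps_def E by simp
    then show ?thesis using T_val[OF eq ns, of \<omega>] True by simp
  next
    case False
    have aI: "a \<notin> I" using I memA by auto
    have "shift (pi I) 1 = I" using False I
      by (simp add: pi_def A_def shift_shift shift_0)
    then have eq: "I \<union> {a} = shift (pi I) 1 \<union> {a}" and ns: "a \<notin> shift (pi I) 1"
      using aI by auto
    have Isub: "I \<subseteq> {-b..a-1}" using I memA by blast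
    have E: "{i \<in> I. i < a} = I" using in_ival[OF Isub] by force
    have "eps a I = ((-1::'k) ^ nat a)" unfolding eps_def E using I memA by simp
    then show ?thesis using T_val[OF eq ns, of \<omega>] False by simp
  qed
qed

lemma cardN:
  assumes a1: "a \<ge> 1" and b1: "b \<ge> 1"
  shows "card (asubsets a b \<inter> {I. -b \<in> I}) = nat (a+b-1) choose nat (a-1)"
    "card (asubsets a b \<inter> - {I. -b \<in> I}) = nat (a+b-1) choose nat a"
proof -
  have cI: "card {-b+1..a-1} = nat (a+b-1)" by simp
  have sub: "(K \<subseteq> {-b..a-1} \<and> -b \<notin> K) \<longleftrightarrow> K \<subseteq> {-b+1..a-1}" for K
  proof
    assume h: "K \<subseteq> {-b..a-1} \<and> -b \<notin> K"
    show "K \<subseteq> {-b+1..a-1}"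
    proof
      fix x assume "x \<in> K" then show "x \<in> {-b+1..a-1}" using h in_ival[of K "-b" "a-1" x]
        by (cases "x = -b") auto
    qed
  next
    assume h: "K \<subseteq> {-b+1..a-1}"
    have "{-b+1..a-1} \<subseteq> {-b..a-1}" by auto
    then show "K \<subseteq> {-b..a-1} \<and> -b \<notin> K" using h by auto
  qed
  have "asubsets a b \<inter> - {I. -b \<in> I} = {K. K \<subseteq> {-b+1..a-1} \<and> card K = nat a}"
    unfolding asubsets_def using sub by blast
  then show "card (asubsets a b \<inter> - {I. -b \<in> I}) = nat (a+b-1) choose nat a"
    using n_subsets[of "{-b+1..a-1}" "nat a"] cI by simp
  define B where "B = {K. K \<subseteq> {-b+1..a-1} \<and> card K = nat (a-1)}"
  have fK: "K \<subseteq> {-b+1..a-1} \<Longrightarrow> finite K" for K using finite_subset by blast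
  have "asubsets a b \<inter> {I. -b \<in> I} = insert (-b) ` B"
  proof
    show "asubsets a b \<inter> {I. -b \<in> I} \<subseteq> insert (-b) ` B"
    proof
      fix I assume I: "I \<in> asubsets a b \<inter> {I. -b \<in> I}"
      then have h: "I \<subseteq> {-b..a-1}" "card I = nat a" "-b \<in> I" unfolding asubsets_def by auto
      have "I - {-b} \<subseteq> {-b+1..a-1}" using sub[of "I - {-b}"] h by blast
      moreover have "card (I - {-b}) = nat (a-1)" using h fK[OF calculation] a1
        by (simp add: card_Diff_singleton_if)
      ultimately have "I - {-b} \<in> B" unfolding B_def by simp
      moreover have "I = insert (-b) (I - {-b})" using h by blast
      ultimately show "I \<in> insert (-b) ` B" by blast
    qed
  next
    show "insert (-b) ` B \<subseteq> asubsets a b \<inter> {I. -b \<in> I}"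
    proof
      fix I assume "I \<in> insert (-b) ` B"
      then obtain K where K: "K \<in> B" "I = insert (-b) K" by blast
      then have h: "K \<subseteq> {-b+1..a-1}" "card K = nat (a-1)" unfolding B_def by auto
      have nb: "-b \<notin> K" using sub[of K] h by blast
      have "K \<subseteq> {-b..a-1}" using sub[of K] h by blast
      then have "I \<subseteq> {-b..a-1}" using K a1 b1 by auto
      moreover have "card I = nat a" using K h nb fK[OF h(1)] a1 by simp
      ultimately show "I \<in> asubsets a b \<inter> {I. -b \<in> I}" using K unfolding asubsets_def by simp
    qed
  qed
  moreover have "inj_on (insert (-b)) B"
  proof (rule inj_onI)
    fix K L assume "K \<in> B" "L \<in> B" "insert (-b) K = insert (-b) L"
    moreover have "-b \<notin> K" "-b \<notin> L" using calculation sub unfolding B_def by blast+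
    ultimately show "K = L" by (metis Diff_insert_absorb)
  qed
  ultimately have "card (asubsets a b \<inter> {I. -b \<in> I}) = card B" by (simp add: card_image)
  also have "\<dots> = nat (a+b-1) choose nat (a-1)"
    unfolding B_def using n_subsets[of "{-b+1..a-1}" "nat (a-1)"] cI by simp
  finally show "card (asubsets a b \<inter> {I. -b \<in> I}) = nat (a+b-1) choose nat (a-1)" .
qed

theorem mainTheorem6:
  fixes S :: "int set" and \<omega> :: "int \<Rightarrow> 'k::field_char_0" and a b :: int
  assumes "finite S" and "S \<noteq> {}"
    and "a = Max S" and "b = - Min S" and "a \<ge> 1" and "b \<ge> 1"
    and "\<And>s. s \<notin> S \<Longrightarrow> \<omega> s = 0"
  shows "(\<exists>sg::'k. (sg = 1 \<or> sg = -1) \<and>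
           det_on (asubsets a b) (Tmat \<omega> a) =
             sg * beta \<omega> (-b) ^ (nat (a + b - 1) choose nat (a - 1))
                * beta \<omega> a ^ (nat (a + b - 1) choose nat a))
       \<and> (beta \<omega> (-b) * beta \<omega> a \<noteq> 0 \<longrightarrow>
           {\<pi>. \<pi> permutes asubsets a b \<and> (\<forall>I \<in> asubsets a b. Tmat \<omega> a I (\<pi> I) \<noteq> 0)}
           = {(\<lambda>I. if I \<in> asubsets a b then
                      (if -b \<in> I then shift ((I \<union> {a}) - {-b}) (-1) else shift I (-1))
                    else I)})"
proof -
  have a1: "a \<ge> 1" and b1: "b \<ge> 1" using assms by auto
  define A where "A = asubsets a b"
  define pi where "pi = (\<lambda>I. if I \<in> asubsets a b then
                      (if -b \<in> I then shift ((I \<union> {a}) - {-b}) (-1) else shift I (-1))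
                    else I)"
  have fin: "finite A" and piperm: "pi permutes A"
    using main_comb(1,2)[OF a1 b1] unfolding A_def pi_def by auto
  have uniq: "\<And>p. p permutes A \<Longrightarrow> (\<forall>I\<in>A. Tmat \<omega> a I (p I) \<noteq> 0) \<Longrightarrow> p = pi"
    using main_comb(3)[OF a1 b1, of _ \<omega>] unfolding A_def pi_def by blast
  have piT: "\<And>I. I \<in> A \<Longrightarrow> Tmat \<omega> a I (pi I) = (if -b \<in> I then beta \<omega> (-b) else (-1)^nat a * beta \<omega> a)"
    using main_comb(4)[OF a1 b1, of _ \<omega>] unfolding A_def pi_def by blast
  define N1 where "N1 = nat (a + b - 1) choose nat (a - 1)"
  define N2 where "N2 = nat (a + b - 1) choose nat a"
  have cN1: "card (A \<inter> {I. -b \<in> I}) = N1" using cardN[OF a1 b1] unfolding A_def N1_def by simp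
  have cN2: "card (A \<inter> - {I. -b \<in> I}) = N2" using cardN[OF a1 b1] unfolding A_def N2_def by simp
  let ?P = "{p. p permutes A}"
  let ?f = "\<lambda>p. (of_int (sign p) :: 'k) * (\<Prod>i\<in>A. Tmat \<omega> a i (p i))"
  have finP: "finite ?P" using finite_permutations[OF fin] by simp
  have piP: "pi \<in> ?P" using piperm by simp
  have "det_on A (Tmat \<omega> a) = ?f pi + sum ?f (?P - {pi})"
    unfolding det_on_def using sum.remove[OF finP piP, of ?f] by simp
  also have "sum ?f (?P - {pi}) = 0"
  proof (rule sum.neutral, rule ballI)
    fix p assume "p \<in> ?P - {pi}"
    then have "p permutes A" "p \<noteq> pi" by auto
    then obtain I where "I \<in> A" "Tmat \<omega> a I (p I) = 0" using uniq by blast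
    then have "(\<Prod>i\<in>A. Tmat \<omega> a i (p i)) = 0" using fin by (metis prod_zero)
    then show "?f p = 0" by simp
  qed
  also have "(\<Prod>i\<in>A. Tmat \<omega> a i (pi i)) =
      (\<Prod>i\<in>A. if -b \<in> i then beta \<omega> (-b) else (-1)^nat a * beta \<omega> a)"
    using piT by (rule prod.cong[OF refl])
  also have "\<dots> = beta \<omega> (-b) ^ N1 * ((-1)^nat a * beta \<omega> a) ^ N2"
    unfolding prod.If_cases[OF fin] using cN1 cN2 by simp
  finally have det: "det_on A (Tmat \<omega> a) =
      (of_int (sign pi) * (-1) ^ (nat a * N2)) * beta \<omega> (-b) ^ N1 * beta \<omega> a ^ N2"
    by (simp add: power_mult_distrib power_mult[symmetric] mult.commute mult.left_commute)
  have s1: "(of_int (sign pi) :: 'k) = 1 \<or> of_int (sign pi) = (-1 :: 'k)"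
    by (simp add: sign_def)
  have s2: "(-1 :: 'k) ^ (nat a * N2) = 1 \<or> (-1 :: 'k) ^ (nat a * N2) = -1"
    by (cases "even (nat a * N2)") auto
  have part1: "\<exists>sg::'k. (sg = 1 \<or> sg = -1) \<and>
           det_on (asubsets a b) (Tmat \<omega> a) =
             sg * beta \<omega> (-b) ^ (nat (a + b - 1) choose nat (a - 1))
                * beta \<omega> a ^ (nat (a + b - 1) choose nat a)"
    apply (rule exI[of _ "of_int (sign pi) * (-1) ^ (nat a * N2)"])
    using det s1 s2 unfolding A_def N1_def N2_def by auto
  have part2: "{\<pi>. \<pi> permutes A \<and> (\<forall>I \<in> A. Tmat \<omega> a I (\<pi> I) \<noteq> 0)} = {pi}"
    if nz: "beta \<omega> (-b) * beta \<omega> a \<noteq> 0"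
  proof
    show "{\<pi>. \<pi> permutes A \<and> (\<forall>I \<in> A. Tmat \<omega> a I (\<pi> I) \<noteq> 0)} \<subseteq> {pi}"
      using uniq by blast
    have "\<forall>I \<in> A. Tmat \<omega> a I (pi I) \<noteq> 0" using piT nz by simp
    then show "{pi} \<subseteq> {\<pi>. \<pi> permutes A \<and> (\<forall>I \<in> A. Tmat \<omega> a I (\<pi> I) \<noteq> 0)}"
      using piperm by simp
  qed
  show ?thesis using part1 part2 unfolding A_def pi_def by blast
qed

end
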